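(* For every graph $G$ and every $S\subseteq V(G)$, $S$ is well-linked if and only if $S$ is externally-well-linked.
   Context: A set $S\subseteq V(G)$ is well-linked if for every pair $A,B\subseteq S$ with $|A|=|B|$ there exist $|A|$ pairwise vertex-disjoint paths from $A$ to $B$. It is externally-well-linked if for every such pair these $|A|$ vertex-disjoint paths from $A$ to $B$ can moreover be chosen with no internal vertex in $S$. *)

theory Defs
  imports Main
begin

definition graph :: "'a set \<Rightarrow> ('a \<Rightarrow> 'a \<Rightarrow> bool) \<Rightarrow> bool" where
  "graph V E \<longleftrightarrow> finite V \<and> (\<forall>u v. E u v \<longrightarrow> u \<in> V \<and> v \<in> V)
     \<and> (\<forall>u v. E u v \<longrightarrow> E v u) \<and> (\<forall>v. \<not> E v v)"

definition is_path :: "'a set \<Rightarrow> ('a \<Rightarrow> 'a \<Rightarrow> bool) \<Rightarrow> 'a list \<Rightarrow> bool" where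
  "is_path V E p \<longleftrightarrow> p \<noteq> [] \<and> distinct p \<and> set p \<subseteq> V
     \<and> (\<forall>i. Suc i < length p \<longrightarrow> E (p ! i) (p ! Suc i))"

definition internal :: "'a list \<Rightarrow> 'a set" where
  "internal p = set (butlast (tl p))"

definition disjoint_paths ::
  "'a set \<Rightarrow> ('a \<Rightarrow> 'a \<Rightarrow> bool) \<Rightarrow> ('a list \<Rightarrow> bool) \<Rightarrow> 'a set \<Rightarrow> 'a set \<Rightarrow> bool" where
  "disjoint_paths V E Q A B \<longleftrightarrow> (\<exists>P. finite P \<and> card P = card A
     \<and> (\<forall>p\<in>P. is_path V E p \<and> hd p \<in> A \<and> last p \<in> B \<and> Q p)
     \<and> (\<forall>p\<in>P. \<forall>q\<in>P. p \<noteq> q \<longrightarrow> set p \<inter> set q = {}))"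

definition well_linked :: "'a set \<Rightarrow> ('a \<Rightarrow> 'a \<Rightarrow> bool) \<Rightarrow> 'a set \<Rightarrow> bool" where
  "well_linked V E S \<longleftrightarrow> (\<forall>A B. A \<subseteq> S \<longrightarrow> B \<subseteq> S \<longrightarrow> card A = card B
     \<longrightarrow> disjoint_paths V E (\<lambda>p. True) A B)"

definition externally_well_linked :: "'a set \<Rightarrow> ('a \<Rightarrow> 'a \<Rightarrow> bool) \<Rightarrow> 'a set \<Rightarrow> bool" where
  "externally_well_linked V E S \<longleftrightarrow> (\<forall>A B. A \<subseteq> S \<longrightarrow> B \<subseteq> S \<longrightarrow> card A = card B
     \<longrightarrow> disjoint_paths V E (\<lambda>p. internal p \<inter> S = {}) A B)"

end

theory Submission
  imports Defs
begin

definition wpath :: "('a\<times>'a) set \<Rightarrow> 'a list \<Rightarrow> bool" where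
  "wpath E p \<longleftrightarrow> p \<noteq> [] \<and> distinct p \<and> successively (\<lambda>u v. (u,v)\<in>E) p"

definition sep :: "('a\<times>'a) set \<Rightarrow> 'a set \<Rightarrow> 'a set \<Rightarrow> 'a set \<Rightarrow> bool" where
  "sep E A B X \<longleftrightarrow> (\<forall>p. wpath E p \<longrightarrow> hd p \<in> A \<longrightarrow> last p \<in> B \<longrightarrow> set p \<inter> X \<noteq> {})"

definition linkage :: "('a\<times>'a) set \<Rightarrow> 'a set \<Rightarrow> 'a set \<Rightarrow> nat \<Rightarrow> bool" where
  "linkage E A B k \<longleftrightarrow> (\<exists>P. finite P \<and> card P = k
     \<and> (\<forall>p\<in>P. wpath E p \<and> hd p \<in> A \<and> last p \<in> B)
     \<and> (\<forall>p\<in>P. \<forall>q\<in>P. p \<noteq> q \<longrightarrow> set p \<inter> set q = {}))"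

lemma succ_restrict:
  assumes "successively P xs"
    and "\<And>u v. u \<in> set (butlast xs) \<Longrightarrow> v \<in> set (tl xs) \<Longrightarrow> P u v \<Longrightarrow> Q u v"
  shows "successively Q xs"
  using assms
proof (induction P xs rule: successively.induct)
  case (3 P x y xs)
  have "Q x y" using 3(2,3) by simp
  moreover have "successively Q (y # xs)"
  proof (rule 3(1))
    show "successively P (y # xs)" using 3(2) by simp
    fix u v assume "u \<in> set (butlast (y # xs))" "v \<in> set (tl (y # xs))" "P u v"
    then show "Q u v" using 3(3)[of u v] by (cases xs) auto
  qed
  ultimately show ?case by simp
qed auto

lemma succ_in_tl: "successively P xs \<Longrightarrow> v \<in> set (tl xs) \<Longrightarrow> \<exists>u. P u v"
  by (induction P xs rule: successively.induct) auto

lemma succ_in_butlast: "successively P xs \<Longrightarrow> v \<in> set (butlast xs) \<Longrightarrow> \<exists>w. P v w"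
  by (induction P xs rule: successively.induct) (auto split: if_splits)

lemma succ_not:
  "successively P xs \<Longrightarrow> \<not> successively Q xs \<Longrightarrow>
   \<exists>ys u v zs. xs = ys @ u # v # zs \<and> P u v \<and> \<not> Q u v"
proof (induction P xs rule: successively.induct)
  case (3 P x y xs)
  show ?case
  proof (cases "Q x y")
    case True
    have a: "successively P (y # xs)" using 3(2) by simp
    have b: "\<not> successively Q (y # xs)" using 3(3) True by simp
    obtain ys u v zs where h: "y # xs = ys @ u # v # zs" "P u v" "\<not> Q u v"
      using 3(1)[OF a b] by blast
    have "x # y # xs = (x#ys) @ u # v # zs" using h(1) by simp
    then show ?thesis using h(2,3)
      by (intro exI[of _ "x#ys"] exI[of _ u] exI[of _ v] exI[of _ zs]) simp
  next
    case False
    have "P x y" using 3(2) by simp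
    then show ?thesis using False
      by (intro exI[of _ "[]"] exI[of _ x] exI[of _ y] exI[of _ xs]) simp
  qed
qed simp_all

lemma shrink:
  assumes fin: "finite P" and disj: "\<forall>p\<in>P. \<forall>q\<in>P. p \<noteq> q \<longrightarrow> set p \<inter> set (q::'a list) = {}"
    and ex: "\<forall>p\<in>P. \<exists>q. R p q \<and> q \<noteq> [] \<and> set q \<subseteq> set p"
  shows "\<exists>Q. finite Q \<and> card Q = card P \<and> (\<forall>q\<in>Q. \<exists>p\<in>P. R p q)
     \<and> (\<forall>p\<in>Q. \<forall>q\<in>Q. p \<noteq> q \<longrightarrow> set p \<inter> set q = {})"
proof -
  define f where "f p = (SOME q. R p q \<and> q \<noteq> [] \<and> set q \<subseteq> set p)" for p
  have f: "R p (f p) \<and> f p \<noteq> [] \<and> set (f p) \<subseteq> set p" if "p \<in> P" for p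
  proof -
    have "\<exists>q. R p q \<and> q \<noteq> [] \<and> set q \<subseteq> set p" using ex that by blast
    from someI_ex[OF this] show ?thesis unfolding f_def .
  qed
  have inj: "inj_on f P"
  proof (rule inj_onI, rule ccontr)
    fix p q assume p: "p \<in> P" and q: "q \<in> P" and eq: "f p = f q" and ne: "p \<noteq> q"
    have "hd (f p) \<in> set p" using f[OF p] hd_in_set by auto
    moreover have "hd (f p) \<in> set q" using f[OF q] eq hd_in_set by auto
    moreover have "set p \<inter> set q = {}" using disj p q ne by auto
    ultimately show False by auto
  qed
  have d: "set a \<inter> set b = {}" if a: "a \<in> f ` P" and b: "b \<in> f ` P" and ab: "a \<noteq> b" for a b
  proof -
    obtain p where p: "p \<in> P" "a = f p" using a by auto
    obtain q where q: "q \<in> P" "b = f q" using b by auto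
    have "p \<noteq> q" using ab p q by auto
    then have "set p \<inter> set q = {}" using disj p q by auto
    moreover have "set a \<subseteq> set p" using f p by auto
    moreover have "set b \<subseteq> set q" using f q by auto
    ultimately show ?thesis by auto
  qed
  have "finite (f ` P)" using fin by simp
  moreover have "card (f ` P) = card P" using card_image[OF inj] .
  moreover have "\<forall>q\<in>f ` P. \<exists>p\<in>P. R p q" using f by auto
  ultimately show ?thesis using d by (intro exI[of _ "f ` P"]) auto
qed

lemma succ_sub: "successively (\<lambda>u v. (u,v)\<in>E') p \<Longrightarrow> E' \<subseteq> E \<Longrightarrow> successively (\<lambda>u v. (u,v)\<in>E) p"
  using successively_mono[of "\<lambda>u v. (u,v)\<in>E'" p "\<lambda>u v. (u,v)\<in>E"] by auto

lemma wpath_succ: "wpath E' p \<Longrightarrow> E' \<subseteq> E \<Longrightarrow> successively (\<lambda>u v. (u,v)\<in>E) p"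
  unfolding wpath_def using succ_sub by auto

lemma wpath_mono: "wpath E' p \<Longrightarrow> E' \<subseteq> E \<Longrightarrow> wpath E p"
  unfolding wpath_def using succ_sub by auto

lemma trunc_first:
  assumes "wpath E p" "last p \<in> X"
  shows "\<exists>q. wpath E q \<and> hd q = hd p \<and> last q \<in> X \<and> set (butlast q) \<inter> X = {} \<and> q \<noteq> [] \<and> set q \<subseteq> set p"
proof -
  have ne: "p \<noteq> []" using assms(1) unfolding wpath_def by auto
  then have "\<exists>w\<in>set p. w \<in> X" using assms(2) last_in_set by auto
  then obtain ys w zs where pd: "p = ys @ w # zs" and w: "w \<in> X" and ys: "\<forall>u\<in>set ys. u \<notin> X"
    using split_list_first_prop[of p "\<lambda>u. u \<in> X"] by auto
  have p2: "p = (ys @ [w]) @ zs" using pd by simp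
  have "distinct (ys @ [w])" using assms(1) p2 unfolding wpath_def by (metis distinct_append)
  moreover have "successively (\<lambda>u v. (u,v)\<in>E) (ys @ [w])"
    using assms(1) p2 unfolding wpath_def by (metis successively_append_iff)
  ultimately have "wpath E (ys @ [w])" unfolding wpath_def by simp
  moreover have "hd (ys @ [w]) = hd p" using pd by (cases ys) auto
  moreover have "set (butlast (ys @ [w])) \<inter> X = {}" using ys by auto
  moreover have "set (ys @ [w]) \<subseteq> set p" using pd by auto
  ultimately show ?thesis using w by (intro exI[of _ "ys @ [w]"]) auto
qed

lemma trunc_last:
  assumes "wpath E p" "hd p \<in> X"
  shows "\<exists>q. wpath E q \<and> last q = last p \<and> hd q \<in> X \<and> set (tl q) \<inter> X = {} \<and> q \<noteq> [] \<and> set q \<subseteq> set p"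
proof -
  have ne: "p \<noteq> []" using assms(1) unfolding wpath_def by auto
  then have "\<exists>w\<in>set p. w \<in> X" using assms(2) hd_in_set by auto
  then obtain ys w zs where pd: "p = ys @ w # zs" and w: "w \<in> X" and zs: "\<forall>u\<in>set zs. u \<notin> X"
    using split_list_last_prop[of p "\<lambda>u. u \<in> X"] by auto
  have "distinct (w # zs)" using assms(1) pd unfolding wpath_def by (metis distinct_append)
  moreover have "successively (\<lambda>u v. (u,v)\<in>E) (w # zs)"
    using assms(1) pd unfolding wpath_def by (metis successively_append_iff)
  ultimately have "wpath E (w # zs)" unfolding wpath_def by simp
  moreover have "last (w # zs) = last p" using pd by simp
  moreover have "set (tl (w # zs)) \<inter> X = {}" using zs by auto
  moreover have "set (w # zs) \<subseteq> set p" using pd by auto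
  ultimately show ?thesis using w by (intro exI[of _ "w # zs"]) auto
qed

lemma link_first:
  assumes "linkage E A B k"
  shows "\<exists>P. finite P \<and> card P = k \<and> (\<forall>p\<in>P. wpath E p \<and> hd p \<in> A \<and> last p \<in> B \<and> set (butlast p) \<inter> B = {})
     \<and> (\<forall>p\<in>P. \<forall>q\<in>P. p \<noteq> q \<longrightarrow> set p \<inter> set q = {})"
proof -
  obtain P where P: "finite P" "card P = k" "\<forall>p\<in>P. wpath E p \<and> hd p \<in> A \<and> last p \<in> B"
    "\<forall>p\<in>P. \<forall>q\<in>P. p \<noteq> q \<longrightarrow> set p \<inter> set q = {}"
    using assms unfolding linkage_def by auto
  have "\<forall>p\<in>P. \<exists>q. (wpath E q \<and> hd q \<in> A \<and> last q \<in> B \<and> set (butlast q) \<inter> B = {}) \<and> q \<noteq> [] \<and> set q \<subseteq> set p"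
  proof
    fix p assume "p \<in> P"
    then have "wpath E p" "hd p \<in> A" "last p \<in> B" using P(3) by auto
    then show "\<exists>q. (wpath E q \<and> hd q \<in> A \<and> last q \<in> B \<and> set (butlast q) \<inter> B = {}) \<and> q \<noteq> [] \<and> set q \<subseteq> set p"
      using trunc_first[of E p B] by auto
  qed
  from shrink[OF P(1) P(4) this] P(2) show ?thesis by auto
qed

lemma link_last:
  assumes "linkage E A B k"
  shows "\<exists>P. finite P \<and> card P = k \<and> (\<forall>p\<in>P. wpath E p \<and> hd p \<in> A \<and> last p \<in> B \<and> set (tl p) \<inter> A = {})
     \<and> (\<forall>p\<in>P. \<forall>q\<in>P. p \<noteq> q \<longrightarrow> set p \<inter> set q = {})"
proof -
  obtain P where P: "finite P" "card P = k" "\<forall>p\<in>P. wpath E p \<and> hd p \<in> A \<and> last p \<in> B"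
    "\<forall>p\<in>P. \<forall>q\<in>P. p \<noteq> q \<longrightarrow> set p \<inter> set q = {}"
    using assms unfolding linkage_def by auto
  have "\<forall>p\<in>P. \<exists>q. (wpath E q \<and> hd q \<in> A \<and> last q \<in> B \<and> set (tl q) \<inter> A = {}) \<and> q \<noteq> [] \<and> set q \<subseteq> set p"
  proof
    fix p assume "p \<in> P"
    then have "wpath E p" "hd p \<in> A" "last p \<in> B" using P(3) by auto
    then show "\<exists>q. (wpath E q \<and> hd q \<in> A \<and> last q \<in> B \<and> set (tl q) \<inter> A = {}) \<and> q \<noteq> [] \<and> set q \<subseteq> set p"
      using trunc_last[of E p A] by auto
  qed
  from shrink[OF P(1) P(4) this] P(2) show ?thesis by auto
qed

lemma combine:
  assumes fin1: "finite P1" and c1: "card P1 = k"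
    and d1: "\<forall>p\<in>P1. \<forall>q\<in>P1. p \<noteq> q \<longrightarrow> set p \<inter> set q = {}"
    and pr1: "\<forall>p\<in>P1. wpath E' p \<and> hd p \<in> A \<and> last p \<in> insert x S \<and> set (butlast p) \<inter> insert x S = {}"
    and fin2: "finite P2" and c2: "card P2 = k"
    and d2: "\<forall>p\<in>P2. \<forall>q\<in>P2. p \<noteq> q \<longrightarrow> set p \<inter> set q = {}"
    and pr2: "\<forall>p\<in>P2. wpath E' p \<and> hd p \<in> insert y S \<and> last p \<in> B \<and> set (tl p) \<inter> insert y S = {}"
    and finS: "finite S" and xS: "x \<notin> S" and yS: "y \<notin> S" and xy: "x \<noteq> y"
    and cS: "card (insert x S) = k"
    and sepS: "sep E' A B S"
    and sub: "E' \<subseteq> E" and e: "(x,y) \<in> E"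
  shows "linkage E A B k"
proof -
  have ne1: "p \<noteq> []" if "p \<in> P1" for p using pr1 that unfolding wpath_def by auto
  have ne2: "p \<noteq> []" if "p \<in> P2" for p using pr2 that unfolding wpath_def by auto
  have dist1: "distinct p" if "p \<in> P1" for p using pr1 that unfolding wpath_def by auto
  have dist2: "distinct p" if "p \<in> P2" for p using pr2 that unfolding wpath_def by auto
  have inj1: "inj_on last P1"
  proof (rule inj_onI, rule ccontr)
    fix p q assume p: "p \<in> P1" and q: "q \<in> P1" and eq: "last p = last q" and ne: "p \<noteq> q"
    have "last p \<in> set p" using ne1[OF p] by simp
    moreover have "last q \<in> set q" using ne1[OF q] by simp
    moreover have "set p \<inter> set q = {}" using d1 p q ne by auto
    ultimately show False using eq by auto
  qed
  have inj2: "inj_on hd P2"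
  proof (rule inj_onI, rule ccontr)
    fix p q assume p: "p \<in> P2" and q: "q \<in> P2" and eq: "hd p = hd q" and ne: "p \<noteq> q"
    have "hd p \<in> set p" using ne2[OF p] by simp
    moreover have "hd q \<in> set q" using ne2[OF q] by simp
    moreover have "set p \<inter> set q = {}" using d2 p q ne by auto
    ultimately show False using eq by auto
  qed
  have im1: "last ` P1 = insert x S"
  proof (rule card_subset_eq)
    show "finite (insert x S)" using finS by simp
    show "last ` P1 \<subseteq> insert x S" using pr1 by auto
    show "card (last ` P1) = card (insert x S)" using card_image[OF inj1] c1 cS by simp
  qed
  have cSy: "card (insert y S) = k" using cS xS yS finS by simp
  have im2: "hd ` P2 = insert y S"
  proof (rule card_subset_eq)
    show "finite (insert y S)" using finS by simp
    show "hd ` P2 \<subseteq> insert y S" using pr2 by auto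
    show "card (hd ` P2) = card (insert y S)" using card_image[OF inj2] c2 cSy by simp
  qed
  define g where "g = inv_into P2 hd"
  have g: "g s \<in> P2" "hd (g s) = s" if "s \<in> insert y S" for s
    using that im2 unfolding g_def by (auto intro: inv_into_into f_inv_into_f)
  have pS: "set p \<inter> S \<subseteq> {last p}" if "p \<in> P1" for p
  proof -
    have bl: "set (butlast p) \<inter> insert x S = {}" using pr1 that by auto
    have "set p = set (butlast p @ [last p])" using ne1[OF that] by simp
    also have "\<dots> = insert (last p) (set (butlast p))" by simp
    finally show ?thesis using bl by auto
  qed
  have qS: "set q \<inter> S \<subseteq> {hd q}" if "q \<in> P2" for q
  proof -
    have bl: "set (tl q) \<inter> insert y S = {}" using pr2 that by auto
    have "set q = set (hd q # tl q)" using ne2[OF that] by simp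
    also have "\<dots> = insert (hd q) (set (tl q))" by simp
    finally show ?thesis using bl by auto
  qed
  have cross: "v \<in> S" if p: "p \<in> P1" and q: "q \<in> P2" and v: "v \<in> set p" "v \<in> set q" for p q v
  proof (rule ccontr)
    assume "v \<notin> S"
    have wp: "wpath E' p" "hd p \<in> A" using pr1 p by blast+
    have wq: "wpath E' q" "last q \<in> B" using pr2 q by blast+
    have sp: "successively (\<lambda>u v. (u,v) \<in> E') p" and sq: "successively (\<lambda>u v. (u,v) \<in> E') q"
      using wp(1) wq(1) unfolding wpath_def by blast+
    from \<open>v \<notin> S\<close> have "\<exists>w\<in>set p. w \<in> set q \<and> w \<notin> S" using v by auto
    then obtain p1 w p2 where pd: "p = p1 @ w # p2" and w: "w \<in> set q" "w \<notin> S"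
      and p1: "\<forall>u\<in>set p1. \<not> (u \<in> set q \<and> u \<notin> S)"
      using split_list_first_prop[of p "\<lambda>u. u \<in> set q \<and> u \<notin> S"] by auto
    obtain q1 q2 where qd: "q = q1 @ w # q2" using w(1) split_list by metis
    have lp: "last p \<in> set (w # p2)" using pd by simp
    have hq: "hd q \<in> set (q1 @ [w])" using qd by (cases q1) auto
    have p1S: "set p1 \<inter> S = {}"
    proof -
      have "last p \<notin> set p1" using dist1[OF p] pd lp by auto
      then show ?thesis using pS[OF p] pd by auto
    qed
    have q2S: "set q2 \<inter> S = {}"
    proof -
      have "hd q \<notin> set q2" using dist2[OF q] qd hq by auto
      then show ?thesis using qS[OF q] qd by auto
    qed
    have p1q2: "set p1 \<inter> set q2 = {}" using p1 q2S qd by auto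
    define r where "r = p1 @ w # q2"
    have "wpath E' r"
    proof -
      have "distinct r" using dist1[OF p] dist2[OF q] pd qd p1q2 unfolding r_def by auto
      moreover have "successively (\<lambda>u v. (u,v) \<in> E') r"
        using sp sq pd qd unfolding r_def by (auto simp: successively_append_iff)
      ultimately show ?thesis unfolding wpath_def r_def by simp
    qed
    moreover have "hd r \<in> A" using wp(2) pd unfolding r_def by (cases p1) auto
    moreover have "last r \<in> B" using wq(2) qd unfolding r_def by (cases q2) auto
    moreover have "set r \<inter> S = {}" using p1S q2S w unfolding r_def by auto
    ultimately show False using sepS unfolding sep_def by auto
  qed
  define \<phi> where "\<phi> s = (if s = x then y else s)" for s
  define qq where "qq p = g (\<phi> (last p))" for p
  define c where "c p = p @ (if last p = x then qq p else tl (qq p))" for p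
  have phi: "\<phi> (last p) \<in> insert y S" if "p \<in> P1" for p using pr1 that unfolding \<phi>_def by auto
  have qq: "qq p \<in> P2" "hd (qq p) = \<phi> (last p)" if "p \<in> P1" for p
    using g phi that unfolding qq_def by auto
  have cset: "set (c p) \<subseteq> set p \<union> set (qq p)" for p
    unfolding c_def by (cases "qq p") auto
  have cgood: "wpath E (c p) \<and> hd (c p) \<in> A \<and> last (c p) \<in> B" if p: "p \<in> P1" for p
  proof (cases "last p = x")
    case True
    have hq: "hd (qq p) = y" using qq[OF p] True unfolding \<phi>_def by simp
    have disj: "set p \<inter> set (qq p) = {}"
      using cross[OF p qq(1)[OF p]] pS[OF p] True xS by auto
    have sp: "successively (\<lambda>u v. (u,v) \<in> E) p" and sq: "successively (\<lambda>u v. (u,v) \<in> E) (qq p)"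
      using pr1 pr2 p qq(1)[OF p] sub wpath_succ by blast+
    have hA: "hd p \<in> A" using pr1 p by auto
    have lB: "last (qq p) \<in> B" using pr2 qq(1)[OF p] by auto
    have n1: "p \<noteq> []" and n2: "qq p \<noteq> []" using ne1[OF p] ne2[OF qq(1)[OF p]] .
    have "distinct (p @ qq p)" using disj dist1[OF p] dist2[OF qq(1)[OF p]] by simp
    moreover have "successively (\<lambda>u v. (u,v) \<in> E) (p @ qq p)"
      using sp sq n1 n2 True hq e by (simp add: successively_append_iff)
    moreover have "hd (p @ qq p) \<in> A" using hA n1 by simp
    moreover have "last (p @ qq p) \<in> B" using lB n2 by simp
    ultimately show ?thesis using True n1 unfolding c_def wpath_def by simp
  next
    case False
    then have ls: "last p \<in> S" using pr1 p by auto
    have hq: "hd (qq p) = last p" using qq[OF p] False unfolding \<phi>_def by simp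
    have qd: "qq p = last p # tl (qq p)" using hq ne2[OF qq(1)[OF p]] by (metis list.collapse)
    have "last p \<notin> set (tl (qq p))" using dist2[OF qq(1)[OF p]] qd by (metis distinct.simps(2))
    then have disj: "set p \<inter> set (tl (qq p)) = {}"
      using cross[OF p qq(1)[OF p]] qS[OF qq(1)[OF p]] hq by (cases "qq p") auto
    have sp: "successively (\<lambda>u v. (u,v) \<in> E) p" and sq: "successively (\<lambda>u v. (u,v) \<in> E) (qq p)"
      using pr1 pr2 p qq(1)[OF p] sub wpath_succ by blast+
    have sq': "successively (\<lambda>u v. (u,v) \<in> E) (last p # tl (qq p))" using sq qd by simp
    have lq: "last (qq p) \<in> B" using pr2 qq(1)[OF p] by auto
    have "successively (\<lambda>u v. (u,v) \<in> E) (p @ tl (qq p))"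
      using sp sq' ne1[OF p] by (auto simp: successively_append_iff successively_Cons)
    moreover have "distinct (p @ tl (qq p))"
      using disj dist1[OF p] dist2[OF qq(1)[OF p]] by (simp add: distinct_tl)
    moreover have "last (p @ tl (qq p)) \<in> B"
    proof (cases "tl (qq p) = []")
      case True
      then show ?thesis using lq qd by (metis append.right_neutral last.simps)
    next
      case F: False
      then show ?thesis using lq qd by (metis last_ConsR last_appendR)
    qed
    moreover have "hd (p @ tl (qq p)) \<in> A" using pr1 p ne1[OF p] by simp
    ultimately show ?thesis using False ne1[OF p] unfolding c_def wpath_def by simp
  qed
  have phiinj: "\<phi> a = \<phi> b \<Longrightarrow> a \<in> insert x S \<Longrightarrow> b \<in> insert x S \<Longrightarrow> a = b" for a b
    using xS yS xy unfolding \<phi>_def by (auto split: if_splits)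
  have cdisj: "set (c p) \<inter> set (c p') = {}" if p: "p \<in> P1" and p': "p' \<in> P1" and ne: "p \<noteq> p'" for p p'
  proof -
    have a: "set p \<inter> set p' = {}" using d1 p p' ne by auto
    have b: "set p \<inter> set (qq p') = {}" if p: "p \<in> P1" and p': "p' \<in> P1" and ne: "p \<noteq> p'" for p p'
    proof (rule ccontr)
      assume "set p \<inter> set (qq p') \<noteq> {}"
      then obtain v where v: "v \<in> set p" "v \<in> set (qq p')" by auto
      have vS: "v \<in> S" using cross[OF p qq(1)[OF p'] v] .
      have "v = last p" using pS[OF p] v vS by auto
      moreover have "v = \<phi> (last p')" using qS[OF qq(1)[OF p']] v vS qq(2)[OF p'] by auto
      ultimately have "\<phi> (last p) = \<phi> (last p')" using vS xS unfolding \<phi>_def by auto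
      then have "last p = last p'" using phiinj pr1 p p' by auto
      then show False using inj1 p p' ne by (meson inj_onD)
    qed
    have cc: "set (qq p) \<inter> set (qq p') = {}"
    proof -
      have "qq p \<noteq> qq p'"
      proof
        assume "qq p = qq p'"
        then have "\<phi> (last p) = \<phi> (last p')" using qq p p' by metis
        then have "last p = last p'" using phiinj pr1 p p' by auto
        then show False using inj1 p p' ne by (meson inj_onD)
      qed
      then show ?thesis using d2 qq(1)[OF p] qq(1)[OF p'] by auto
    qed
    have b1: "set p \<inter> set (qq p') = {}" using b[OF p p' ne] .
    have b2: "set p' \<inter> set (qq p) = {}" using b[OF p' p] ne by metis
    show ?thesis
    proof (rule equals0I)
      fix v assume "v \<in> set (c p) \<inter> set (c p')"
      then have "v \<in> set p \<union> set (qq p)" "v \<in> set p' \<union> set (qq p')" using cset[of p] cset[of p'] by auto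
      then show False using a b1 b2 cc by auto
    qed
  qed
  have cinj: "inj_on c P1"
  proof (rule inj_onI, rule ccontr)
    fix p q assume p: "p \<in> P1" and q: "q \<in> P1" and eq: "c p = c q" and ne: "p \<noteq> q"
    have "c p \<noteq> []" using cgood[OF p] unfolding wpath_def by auto
    then show False using cdisj[OF p q ne] eq by simp
  qed
  show ?thesis unfolding linkage_def
  proof (intro exI[of _ "c ` P1"] conjI)
    show "card (c ` P1) = k" using card_image[OF cinj] c1 by simp
    show "\<forall>p\<in>c ` P1. wpath E p \<and> hd p \<in> A \<and> last p \<in> B" using cgood by auto
    show "\<forall>p\<in>c ` P1. \<forall>q\<in>c ` P1. p \<noteq> q \<longrightarrow> set p \<inter> set q = {}" using cdisj by auto
  qed (use fin1 in auto)
qed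

lemma menger:
  "finite E \<Longrightarrow> finite A \<Longrightarrow> (\<forall>X. finite X \<longrightarrow> sep E A B X \<longrightarrow> k \<le> card X) \<Longrightarrow> linkage E A B k"
proof (induction "card E" arbitrary: E A B k rule: less_induct)
  case less
  show ?case
  proof (cases "E = {}")
    case True
    have sepAB: "sep E A B (A \<inter> B)"
      unfolding sep_def
    proof (intro allI impI)
      fix p assume wp: "wpath E p" and h: "hd p \<in> A" and l: "last p \<in> B"
      have ne: "p \<noteq> []" using wp unfolding wpath_def by simp
      have "tl p = []"
      proof (rule ccontr)
        assume "tl p \<noteq> []"
        then obtain a b r where "p = a # b # r" using ne by (metis list.collapse)
        then show False using wp True unfolding wpath_def by simp
      qed
      then have p1: "p = [hd p]" using ne by (metis list.collapse)
      then have "last p = hd p" by (metis last.simps)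
      then have "hd p \<in> set p \<inter> (A \<inter> B)" using h l p1 by (metis IntI list.set_intros(1))
      then show "set p \<inter> (A \<inter> B) \<noteq> {}" by auto
    qed
    have "finite (A \<inter> B)" using less.prems(2) by simp
    then have "k \<le> card (A \<inter> B)" using less.prems(3) sepAB by auto
    then obtain C where C: "C \<subseteq> A \<inter> B" "card C = k" using obtain_subset_with_card_n by metis
    have fC: "finite C" using C(1) less.prems(2) finite_subset by auto
    have inj: "inj_on (\<lambda>v. [v]) C" by (auto simp: inj_on_def)
    show ?thesis unfolding linkage_def
    proof (intro exI[of _ "(\<lambda>v. [v]) ` C"] conjI)
      show "finite ((\<lambda>v. [v]) ` C)" using fC by simp
      show "card ((\<lambda>v. [v]) ` C) = k" using card_image[OF inj] C(2) by simp
      show "\<forall>p\<in>(\<lambda>v. [v]) ` C. wpath E p \<and> hd p \<in> A \<and> last p \<in> B"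
        using C(1) by (auto simp: wpath_def)
      show "\<forall>p\<in>(\<lambda>v. [v]) ` C. \<forall>q\<in>(\<lambda>v. [v]) ` C. p \<noteq> q \<longrightarrow> set p \<inter> set q = {}"
        by auto
    qed
  next
    case False
    then obtain x y where e: "(x,y) \<in> E" by auto
    define E' where "E' = E - {(x,y)}"
    have fE': "finite E'" using less.prems(1) unfolding E'_def by simp
    have sub: "E' \<subseteq> E" unfolding E'_def by auto
    have ltc: "card E' < card E" unfolding E'_def using card_Diff1_less[OF less.prems(1) e] .
    have IH: "\<And>A B k. finite A \<Longrightarrow> (\<forall>X. finite X \<longrightarrow> sep E' A B X \<longrightarrow> k \<le> card X) \<Longrightarrow> linkage E' A B k"
      using less.hyps[OF ltc fE'] by auto
    show ?thesis
    proof (cases "\<forall>X. finite X \<longrightarrow> sep E' A B X \<longrightarrow> k \<le> card X")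
      case True
      from IH[OF less.prems(2) True] obtain P where P: "finite P" "card P = k"
        "\<forall>p\<in>P. wpath E' p \<and> hd p \<in> A \<and> last p \<in> B"
        "\<forall>p\<in>P. \<forall>q\<in>P. p \<noteq> q \<longrightarrow> set p \<inter> set q = {}"
        unfolding linkage_def by auto
      have "\<forall>p\<in>P. wpath E p \<and> hd p \<in> A \<and> last p \<in> B" using P(3) wpath_mono[OF _ sub] by auto
      then show ?thesis unfolding linkage_def using P(1,2,4) by (intro exI[of _ P]) auto
    next
      case False
      then obtain S where S: "finite S" "sep E' A B S" "\<not> k \<le> card S" by auto
      have key: "\<exists>ys zs. q = ys @ x # y # zs"
        if q: "wpath E q" "hd q \<in> A" "last q \<in> B" "set q \<inter> S = {}" for q
      proof -
        have "\<not> wpath E' q"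
        proof
          assume "wpath E' q"
          from S(2)[unfolded sep_def, rule_format, OF this q(2) q(3)] q(4) show False by simp
        qed
        then have "\<not> successively (\<lambda>u v. (u,v)\<in>E') q" using q(1) unfolding wpath_def by auto
        moreover have "successively (\<lambda>u v. (u,v)\<in>E) q" using q(1) unfolding wpath_def by auto
        ultimately obtain ys u v zs where "q = ys @ u # v # zs" "(u,v) \<in> E" "(u,v) \<notin> E'"
          using succ_not[of "\<lambda>u v. (u,v)\<in>E" q "\<lambda>u v. (u,v)\<in>E'"] by auto
        then have "q = ys @ x # y # zs" unfolding E'_def by auto
        then show ?thesis by auto
      qed
      have nsep: "\<not> sep E A B S" using less.prems(3) S by auto
      then obtain p where p: "wpath E p" "hd p \<in> A" "last p \<in> B" "set p \<inter> S = {}"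
        unfolding sep_def by auto
      from key[OF p] obtain ys zs where pd: "p = ys @ x # y # zs" by auto
      have xy: "x \<noteq> y" using p(1) pd unfolding wpath_def by auto
      have sepx: "sep E A B (insert x S)" unfolding sep_def
      proof (intro allI impI)
        fix q assume q: "wpath E q" "hd q \<in> A" "last q \<in> B"
        show "set q \<inter> insert x S \<noteq> {}"
        proof (cases "set q \<inter> S = {}")
          case True
          then obtain ys zs where "q = ys @ x # y # zs" using key[OF q True] by auto
          then show ?thesis by auto
        next
          case False
          then show ?thesis by auto
        qed
      qed
      have sepy: "sep E A B (insert y S)" unfolding sep_def
      proof (intro allI impI)
        fix q assume q: "wpath E q" "hd q \<in> A" "last q \<in> B"
        show "set q \<inter> insert y S \<noteq> {}"
        proof (cases "set q \<inter> S = {}")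
          case True
          then obtain ys zs where "q = ys @ x # y # zs" using key[OF q True] by auto
          then show ?thesis by auto
        next
          case False
          then show ?thesis by auto
        qed
      qed
      have kx: "k \<le> card (insert x S)" using less.prems(3) sepx S(1) by auto
      have ky: "k \<le> card (insert y S)" using less.prems(3) sepy S(1) by auto
      have xS: "x \<notin> S" using kx S(3) by (metis insert_absorb)
      have yS: "y \<notin> S" using ky S(3) by (metis insert_absorb)
      have cx: "card (insert x S) = k" using kx xS S(1,3) by simp
      have L1: "linkage E' A (insert x S) k"
      proof (rule IH[OF less.prems(2)], intro allI impI)
        fix T assume T: "finite T" "sep E' A (insert x S) T"
        have "sep E A B T" unfolding sep_def
        proof (intro allI impI)
          fix q assume q: "wpath E q" "hd q \<in> A" "last q \<in> B"
          have "set q \<inter> insert x S \<noteq> {}" using sepx[unfolded sep_def, rule_format, OF q] .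
          then have "\<exists>w\<in>set q. w \<in> insert x S" by auto
          then obtain q1 w q2 where qd: "q = q1 @ w # q2" and w: "w \<in> insert x S"
            and q1: "\<forall>u\<in>set q1. u \<notin> insert x S"
            using split_list_first_prop[of q "\<lambda>u. u \<in> insert x S"] by auto
          have q2: "q = (q1 @ [w]) @ q2" using qd by simp
          have "distinct (q1 @ [w])" using q(1) q2 unfolding wpath_def by (metis distinct_append)
          moreover have "successively (\<lambda>u v. (u,v)\<in>E) (q1 @ [w])"
            using q(1) q2 unfolding wpath_def by (metis successively_append_iff)
          then have "successively (\<lambda>u v. (u,v)\<in>E') (q1 @ [w])"
          proof (rule succ_restrict)
            fix u v assume "u \<in> set (butlast (q1 @ [w]))" "(u,v) \<in> E"
            then show "(u,v) \<in> E'" using q1 unfolding E'_def by auto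
          qed
          ultimately have "wpath E' (q1 @ [w])" unfolding wpath_def by simp
          moreover have "hd (q1 @ [w]) \<in> A" using q(2) qd by (cases q1) auto
          moreover have "last (q1 @ [w]) \<in> insert x S" using w by simp
          ultimately have "set (q1 @ [w]) \<inter> T \<noteq> {}" by (rule T(2)[unfolded sep_def, rule_format])
          then show "set q \<inter> T \<noteq> {}" using qd by auto
        qed
        then show "k \<le> card T" using less.prems(3) T(1) by auto
      qed
      have L2: "linkage E' (insert y S) B k"
      proof (rule IH, simp add: S(1), intro allI impI)
        fix T assume T: "finite T" "sep E' (insert y S) B T"
        have "sep E A B T" unfolding sep_def
        proof (intro allI impI)
          fix q assume q: "wpath E q" "hd q \<in> A" "last q \<in> B"
          have "set q \<inter> insert y S \<noteq> {}" using sepy[unfolded sep_def, rule_format, OF q] .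
          then have "\<exists>w\<in>set q. w \<in> insert y S" by auto
          then obtain q1 w q2 where qd: "q = q1 @ w # q2" and w: "w \<in> insert y S"
            and q2: "\<forall>u\<in>set q2. u \<notin> insert y S"
            using split_list_last_prop[of q "\<lambda>u. u \<in> insert y S"] by auto
          have "distinct (w # q2)" using q(1) qd unfolding wpath_def by (metis distinct_append)
          moreover have "successively (\<lambda>u v. (u,v)\<in>E) (w # q2)"
            using q(1) qd unfolding wpath_def by (metis successively_append_iff)
          then have "successively (\<lambda>u v. (u,v)\<in>E') (w # q2)"
          proof (rule succ_restrict)
            fix u v assume "v \<in> set (tl (w # q2))" "(u,v) \<in> E"
            then show "(u,v) \<in> E'" using q2 unfolding E'_def by auto
          qed
          ultimately have "wpath E' (w # q2)" unfolding wpath_def by simp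
          moreover have "hd (w # q2) \<in> insert y S" using w by simp
          moreover have "last (w # q2) \<in> B" using q(3) qd by simp
          ultimately have "set (w # q2) \<inter> T \<noteq> {}" by (rule T(2)[unfolded sep_def, rule_format])
          then show "set q \<inter> T \<noteq> {}" using qd by auto
        qed
        then show "k \<le> card T" using less.prems(3) T(1) by auto
      qed
      obtain P1 where P1: "finite P1" "card P1 = k"
        "\<forall>p\<in>P1. wpath E' p \<and> hd p \<in> A \<and> last p \<in> insert x S \<and> set (butlast p) \<inter> insert x S = {}"
        "\<forall>p\<in>P1. \<forall>q\<in>P1. p \<noteq> q \<longrightarrow> set p \<inter> set q = {}"
        using link_first[OF L1] by auto
      obtain P2 where P2: "finite P2" "card P2 = k"
        "\<forall>p\<in>P2. wpath E' p \<and> hd p \<in> insert y S \<and> last p \<in> B \<and> set (tl p) \<inter> insert y S = {}"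
        "\<forall>p\<in>P2. \<forall>q\<in>P2. p \<noteq> q \<longrightarrow> set p \<inter> set q = {}"
        using link_last[OF L2] by auto
      show ?thesis
        by (rule combine[OF P1(1,2,4,3) P2(1,2,4,3) S(1) xS yS xy cx S(2) sub e])
    qed
  qed
qed

lemma wl_ext:
  assumes G: "graph V E" and SV: "S \<subseteq> V" and wl: "well_linked V E S"
    and AS: "A \<subseteq> S" and BS: "B \<subseteq> S" and cAB: "card A = card B"
  shows "disjoint_paths V E (\<lambda>p. internal p \<inter> S = {}) A B"
proof -
  have finV: "finite V" and EV: "\<And>u v. E u v \<Longrightarrow> u \<in> V \<and> v \<in> V"
    using G unfolding graph_def by auto
  have finS: "finite S" using finV SV finite_subset by auto
  have finA: "finite A" using finS AS finite_subset by auto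
  have finB: "finite B" using finS BS finite_subset by auto
  define E' where "E' = {(u,v). E u v \<and> u \<notin> B \<and> v \<notin> A \<and> (u \<in> A \<or> u \<notin> S) \<and> (v \<in> B \<or> v \<notin> S)}"
  have fE': "finite E'"
  proof (rule finite_subset)
    show "E' \<subseteq> V \<times> V" unfolding E'_def using EV by auto
    show "finite (V \<times> V)" using finV by simp
  qed
  have sepk: "\<forall>X. finite X \<longrightarrow> sep E' A B X \<longrightarrow> card A \<le> card X"
  proof (intro allI impI, rule ccontr)
    fix X assume X: "finite X" "sep E' A B X" "\<not> card A \<le> card X"
    define T where "T = S - (A \<union> B \<union> X)"
    have fT: "finite T" using finS unfolding T_def by simp
    have A'S: "A \<union> T \<subseteq> S" and B'S: "B \<union> T \<subseteq> S" using AS BS unfolding T_def by auto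
    have cA': "card (A \<union> T) = card A + card T"
      by (rule card_Un_disjoint) (use finA fT in \<open>auto simp: T_def\<close>)
    have cB': "card (B \<union> T) = card B + card T"
      by (rule card_Un_disjoint) (use finB fT in \<open>auto simp: T_def\<close>)
    have cc: "card (A \<union> T) = card (B \<union> T)" using cA' cB' cAB by simp
    have "disjoint_paths V E (\<lambda>p. True) (A \<union> T) (B \<union> T)"
      using wl[unfolded well_linked_def, rule_format, OF A'S B'S cc] .
    then obtain P where P: "finite P" "card P = card (A \<union> T)"
      "\<forall>p\<in>P. is_path V E p \<and> hd p \<in> A \<union> T \<and> last p \<in> B \<union> T"
      "\<forall>p\<in>P. \<forall>q\<in>P. p \<noteq> q \<longrightarrow> set p \<inter> set q = {}"
      unfolding disjoint_paths_def by auto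
    have hit: "\<exists>v. v \<in> set p \<and> v \<in> X \<union> T" if pP: "p \<in> P" for p
    proof (rule ccontr)
      assume nh: "\<not> (\<exists>v. v \<in> set p \<and> v \<in> X \<union> T)"
      have ip: "is_path V E p" "hd p \<in> A \<union> T" "last p \<in> B \<union> T" using P(3) pP by auto
      have ne: "p \<noteq> []" and dp: "distinct p" and sp: "successively E p"
        using ip(1) unfolding is_path_def successively_conv_nth by auto
      have hA: "hd p \<in> A" using ip(2) nh ne hd_in_set by auto
      have lB: "last p \<in> B" using ip(3) nh ne last_in_set by auto
      have "\<exists>w\<in>set p. w \<in> A" using hA ne hd_in_set by auto
      then obtain ys a zs where pd: "p = ys @ a # zs" and a: "a \<in> A" and zs: "\<forall>z\<in>set zs. z \<notin> A"
        using split_list_last_prop[of p "\<lambda>u. u \<in> A"] by auto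
      have "last p \<in> set (a # zs)" using pd by simp
      then have "\<exists>w\<in>set (a # zs). w \<in> B" using lB by auto
      then obtain us b ws where azs: "a # zs = us @ b # ws" and b: "b \<in> B" and us: "\<forall>u\<in>set us. u \<notin> B"
        using split_list_first_prop[of "a # zs" "\<lambda>u. u \<in> B"] by auto
      define r where "r = us @ [b]"
      have seq: "insert a (set zs) = set us \<union> insert b (set ws)" using arg_cong[OF azs, of set] by simp
      have sub_r: "set r \<subseteq> set p" using seq pd unfolding r_def by auto
      have us_sub: "set us \<subseteq> insert a (set zs)" using seq by auto
      have tl_sub: "set (tl r) \<subseteq> set zs"
      proof (cases us)
        case Nil then show ?thesis unfolding r_def by simp
      next
        case (Cons u us')
        then have "zs = us' @ b # ws" using azs by simp
        then show ?thesis using Cons unfolding r_def by auto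
      qed
      have hr: "hd r = a" using azs unfolding r_def by (cases us) auto
      have notS: "z \<notin> S" if "z \<in> set zs" "z \<notin> B" for z
      proof
        assume "z \<in> S"
        have "z \<in> set p" using that pd by simp
        then have "z \<notin> X" "z \<notin> T" using nh by auto
        moreover have "z \<notin> A" using zs that by auto
        ultimately show False using \<open>z \<in> S\<close> that unfolding T_def by auto
      qed
      have dpa: "distinct (a # zs)" using dp pd by simp
      then have "distinct r" using azs unfolding r_def by simp
      moreover have "successively E (a # zs)" using sp pd by (simp add: successively_append_iff)
      then have "successively E (us @ b # ws)" using azs by simp
      then have "successively E r" unfolding r_def by (simp add: successively_append_iff)
      then have "successively (\<lambda>u v. (u,v) \<in> E') r"
      proof (rule succ_restrict)
        fix u v assume u: "u \<in> set (butlast r)" and v: "v \<in> set (tl r)" and uv: "E u v"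
        have u': "u \<in> set us" using u unfolding r_def by simp
        have uB: "u \<notin> B" using u' us by auto
        have vzs: "v \<in> set zs" using v tl_sub by auto
        have vA: "v \<notin> A" using vzs zs by auto
        have uA: "u \<in> A \<or> u \<notin> S"
        proof (cases "u = a")
          case True then show ?thesis using a by simp
        next
          case False then have "u \<in> set zs" using u' us_sub by auto
          then show ?thesis using notS uB by auto
        qed
        have vB: "v \<in> B \<or> v \<notin> S"
        proof (cases "v = b")
          case True then show ?thesis using b by simp
        next
          case False
          then have "v \<in> set us" using v unfolding r_def by (cases us) auto
          then have "v \<notin> B" using us by auto
          then show ?thesis using notS vzs by auto
        qed
        show "(u,v) \<in> E'" unfolding E'_def using uv uB vA uA vB by auto
      qed
      ultimately have "wpath E' r" unfolding wpath_def r_def by simp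
      moreover have "hd r \<in> A" using hr a by simp
      moreover have "last r \<in> B" using b unfolding r_def by simp
      ultimately have "set r \<inter> X \<noteq> {}" by (rule X(2)[unfolded sep_def, rule_format])
      then show False using sub_r nh by auto
    qed
    define h where "h p = (SOME v. v \<in> set p \<and> v \<in> X \<union> T)" for p
    have h: "h p \<in> set p \<and> h p \<in> X \<union> T" if "p \<in> P" for p
      unfolding h_def using someI_ex[OF hit[OF that]] .
    have injh: "inj_on h P"
    proof (rule inj_onI, rule ccontr)
      fix p q assume p: "p \<in> P" and q: "q \<in> P" and eq: "h p = h q" and ne: "p \<noteq> q"
      have "set p \<inter> set q = {}" using P(4) p q ne by auto
      then show False using h[OF p] h[OF q] eq by auto
    qed
    have "h ` P \<subseteq> X \<union> T" using h by auto
    then have "card (h ` P) \<le> card (X \<union> T)" using X(1) fT by (intro card_mono) auto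
    also have "\<dots> \<le> card X + card T" by (rule card_Un_le)
    finally have "card P \<le> card X + card T" using card_image[OF injh] by simp
    then show False using P(2) cA' X(3) by simp
  qed
  from menger[OF fE' finA sepk] obtain P where P: "finite P" "card P = card A"
    "\<forall>p\<in>P. wpath E' p \<and> hd p \<in> A \<and> last p \<in> B"
    "\<forall>p\<in>P. \<forall>q\<in>P. p \<noteq> q \<longrightarrow> set p \<inter> set q = {}"
    unfolding linkage_def by auto
  have good: "is_path V E p \<and> internal p \<inter> S = {}" if pP: "p \<in> P" for p
  proof -
    have wp: "wpath E' p" "hd p \<in> A" "last p \<in> B" using P(3) pP by auto
    have ne: "p \<noteq> []" and dp: "distinct p" and sp: "successively (\<lambda>u v. (u,v) \<in> E') p"
      using wp(1) unfolding wpath_def by auto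
    have spE: "successively E p"
      using successively_mono[OF sp, of E] unfolding E'_def by auto
    have tlV: "v \<in> V" if vt: "v \<in> set (tl p)" for v
    proof -
      obtain u where "(u,v) \<in> E'" using succ_in_tl[OF sp vt] by auto
      then show ?thesis using EV unfolding E'_def by auto
    qed
    have "set p \<subseteq> V"
    proof
      fix v assume "v \<in> set p"
      then have "v = hd p \<or> v \<in> set (tl p)" using ne by (cases p) auto
      then show "v \<in> V" using tlV wp(2) AS SV by auto
    qed
    then have "is_path V E p" using ne dp spE unfolding is_path_def successively_conv_nth by auto
    moreover have "internal p \<inter> S = {}"
    proof (rule equals0I)
      fix v assume v: "v \<in> internal p \<inter> S"
      then have v0: "v \<in> set (butlast (tl p))" unfolding internal_def by simp
      then have v1: "v \<in> set (tl p)" by (rule in_set_butlastD)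
      have "v \<in> set (tl (butlast p))" using v0 unfolding butlast_tl .
      then have v2: "v \<in> set (butlast p)" by (cases "butlast p") auto
      obtain u where "(u,v) \<in> E'" using succ_in_tl[OF sp v1] by auto
      then have "v \<notin> A" "v \<in> B \<or> v \<notin> S" unfolding E'_def by auto
      moreover obtain w where "(v,w) \<in> E'" using succ_in_butlast[OF sp v2] by auto
      then have "v \<notin> B" "v \<in> A \<or> v \<notin> S" unfolding E'_def by auto
      ultimately show False using v by auto
    qed
    ultimately show ?thesis by simp
  qed
  show ?thesis unfolding disjoint_paths_def
    using P(1,2,4) good P(3) by (intro exI[of _ P]) auto
qed

theorem lemma15:
  assumes "graph V E" and "S \<subseteq> V"
  shows "well_linked V E S \<longleftrightarrow> externally_well_linked V E S"
proof
  assume "well_linked V E S"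
  then show "externally_well_linked V E S"
    unfolding externally_well_linked_def using wl_ext[OF assms] by auto
next
  assume ext: "externally_well_linked V E S"
  show "well_linked V E S" unfolding well_linked_def
  proof (intro allI impI)
    fix A B assume "A \<subseteq> S" "B \<subseteq> S" "card A = card B"
    then have "disjoint_paths V E (\<lambda>p. internal p \<inter> S = {}) A B"
      using ext unfolding externally_well_linked_def by auto
    then show "disjoint_paths V E (\<lambda>p. True) A B" unfolding disjoint_paths_def by auto
  qed
qed

end
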